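(* Let $T,V,\alpha,\Omega,G$ satisfy the Standing Assumption (G), let $\mathcal O\subseteq\mathbb{C}$ be open and let $(\varphi_\kappa)_{\kappa\in\mathcal O}$ be holomorphic functions $\varphi_\kappa:\Omega\to\mathbb{C}$ satisfying $|\varphi_\kappa(z)|\le A(\kappa)e^{B(\kappa)|z|}$ for $z\in\Omega$, with $A(\kappa),B(\kappa)\ge0$ depending continuously on $\kappa$. If for every $z\in\Omega$ the map $\mathcal O\ni\kappa\mapsto\varphi_\kappa(z)$ is holomorphic, then for every fixed $t\in(0,T)$ and $x\in\mathbb{R}$ the map $\mathcal O\ni\kappa\mapsto\Psi(t,x;\varphi_\kappa)$ is holomorphic.
   Context: Double sector: $S_\alpha:=\{0\}\cup\{z\ne0:\mathrm{Arg}(z)\in[0,\alpha]\cup[\pi,\pi+\alpha]\}$, $\mathrm{Arg}\in[0,2\pi)$. $\mathrm{AC}_{1,2}((0,T)\times\mathbb{R})$: functions $\Psi$ with $\Psi(\cdot,x)$ absolutely continuous on $(0,T)$ for all $x$ and $\Psi(t,\cdot),\partial_x\Psi(t,\cdot)$ absolutely continuous on $\mathbb{R}$ for all $t$. Standing Assumption (G): $T\in(0,\infty]$, $V:(0,T)\times\mathbb{R}\to\mathbb{C}$, $\alpha\in(0,\frac\pi2)$, $\Omega\supseteq S_\alpha$ open, $G:(0,T)\times\mathbb{R}\times\Omega\to\mathbb{C}$ holomorphic in $z$, such that: (i) for every $z\in S_\alpha$, $G(\cdot,\cdot,z)\in\mathrm{AC}_{1,2}$ and $i\partial_tG=(-\partial_x^2+V)G$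 a.e.; (ii) there is an absolutely continuous $a:(0,T)\to(0,\infty)$ with $a(t)\to\infty$ as $t\to0^+$ such that $G(t,x,z)=e^{ia(t)(z-x)^2}\widetilde G(t,x,z)$ with $|\widetilde G(t,x,z)|\le A_0(t,x)e^{B_0(t,x)|z|}$ on $(0,T)\times\mathbb{R}\times\Omega$, $A_0,B_0\ge0$ continuous, and $A_0/\sqrt a$, $B_0$ extending continuously to $[0,T)\times\mathbb{R}$; (iii) $\lim_{t\to0^+}\widetilde G(t,x,z)/\sqrt{a(t)}=1/\sqrt{i\pi}$ for all $x,z$; (iv) $|\partial_x\widetilde G|,|\partial_x^2\widetilde G|,|\partial_t\widetilde G|\le A_1(t,x)e^{B_1(t,x)|z|}$ for $z\in S_\alpha$, with $A_1\ge0$ locally integrable and $B_1\ge0$ continuous. For $F$ holomorphic on $\Omega$ with an exponential bound $|F(z)|\le Ae^{B|z|}$, $\Psi(t,x;F):=\lim_{\varepsilon\to0^+}\int_{\mathbb{R}}e^{-\varepsilon y^2}G(t,x,y)F(y)dy$ for $t\in(0,T)$. *)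

theory Defs
  imports "HOL-Analysis.Analysis" "HOL-Complex_Analysis.Complex_Analysis"
begin

definition double_sector :: "real \<Rightarrow> complex set" where
  "double_sector \<alpha> = {0} \<union>
     {z. \<exists>r \<theta>. r > 0 \<and> z = complex_of_real r * cis \<theta> \<and>
              (\<theta> \<in> {0..\<alpha>} \<or> \<theta> \<in> {pi..pi + \<alpha>})}"

definition abs_cont_on_interval :: "real \<Rightarrow> real \<Rightarrow> (real \<Rightarrow> 'a::real_normed_vector) \<Rightarrow> bool" where
  "abs_cont_on_interval a b f \<longleftrightarrow>
     (\<forall>\<epsilon>>0. \<exists>\<delta>>0. \<forall>(n::nat) (l::nat \<Rightarrow> real) (u::nat \<Rightarrow> real).
        (\<forall>k<n. a \<le> l k \<and> l k \<le> u k \<and> u k \<le> b) \<and>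
        (\<forall>j<n. \<forall>k<n. j \<noteq> k \<longrightarrow> {l j<..<u j} \<inter> {l k<..<u k} = {}) \<and>
        (\<Sum>k<n. u k - l k) < \<delta>
        \<longrightarrow> (\<Sum>k<n. norm (f (u k) - f (l k))) < \<epsilon>)"

definition abs_cont_on :: "real set \<Rightarrow> (real \<Rightarrow> 'a::real_normed_vector) \<Rightarrow> bool" where
  "abs_cont_on I f \<longleftrightarrow> (\<forall>a b. a \<le> b \<longrightarrow> {a..b} \<subseteq> I \<longrightarrow> abs_cont_on_interval a b f)"

definition time_int :: "ereal \<Rightarrow> real set" where
  "time_int T = {t. 0 < t \<and> ereal t < T}"

definition dx :: "(real \<Rightarrow> real \<Rightarrow> complex) \<Rightarrow> real \<Rightarrow> real \<Rightarrow> complex" where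
  "dx \<Psi> t x = vector_derivative (\<lambda>y. \<Psi> t y) (at x)"

definition AC12 :: "ereal \<Rightarrow> (real \<Rightarrow> real \<Rightarrow> complex) \<Rightarrow> bool" where
  "AC12 T \<Psi> \<longleftrightarrow>
     (\<forall>x. abs_cont_on (time_int T) (\<lambda>t. \<Psi> t x)) \<and>
     (\<forall>t \<in> time_int T. abs_cont_on UNIV (\<lambda>x. \<Psi> t x) \<and>
        (\<forall>x. (\<lambda>y. \<Psi> t y) differentiable (at x)) \<and>
        abs_cont_on UNIV (\<lambda>x. dx \<Psi> t x))"

definition solves_schroedinger_ae ::
    "ereal \<Rightarrow> (real \<Rightarrow> real \<Rightarrow> complex) \<Rightarrow> (real \<Rightarrow> real \<Rightarrow> complex) \<Rightarrow> bool" where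
  "solves_schroedinger_ae T V \<Psi> \<longleftrightarrow>
     (AE p in (lborel :: (real \<times> real) measure). fst p \<in> time_int T \<longrightarrow>
        (\<exists>gt gxx. ((\<lambda>s. \<Psi> s (snd p)) has_vector_derivative gt) (at (fst p)) \<and>
                  ((\<lambda>y. dx \<Psi> (fst p) y) has_vector_derivative gxx) (at (snd p)) \<and>
                  \<i> * gt = - gxx + V (fst p) (snd p) * \<Psi> (fst p) (snd p)))"

definition assumption_G ::
    "ereal \<Rightarrow> (real \<Rightarrow> real \<Rightarrow> complex) \<Rightarrow> real \<Rightarrow> complex set
       \<Rightarrow> (real \<Rightarrow> real \<Rightarrow> complex \<Rightarrow> complex) \<Rightarrow> bool" where
  "assumption_G T V \<alpha> \<Omega> G \<longleftrightarrow>
     T > 0 \<and> 0 < \<alpha> \<and> \<alpha> < pi / 2 \<and> open \<Omega> \<and> double_sector \<alpha> \<subseteq> \<Omega> \<and>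
     (\<forall>t \<in> time_int T. \<forall>x. (\<lambda>z. G t x z) holomorphic_on \<Omega>) \<and>
     \<comment> \<open>(i)\<close>
     (\<forall>z \<in> double_sector \<alpha>.
        AC12 T (\<lambda>t x. G t x z) \<and> solves_schroedinger_ae T V (\<lambda>t x. G t x z)) \<and>
     \<comment> \<open>(ii)--(iv)\<close>
     (\<exists>(a :: real \<Rightarrow> real) (Gt :: real \<Rightarrow> real \<Rightarrow> complex \<Rightarrow> complex)
        (A0 :: real \<Rightarrow> real \<Rightarrow> real) (B0 :: real \<Rightarrow> real \<Rightarrow> real)
        (A1 :: real \<Rightarrow> real \<Rightarrow> real) (B1 :: real \<Rightarrow> real \<Rightarrow> real).
        \<comment> \<open>(ii)\<close>
        abs_cont_on (time_int T) a \<and>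
        (\<forall>t \<in> time_int T. a t > 0) \<and>
        filterlim a at_top (at_right 0) \<and>
        (\<forall>t \<in> time_int T. \<forall>x. \<forall>z \<in> \<Omega>.
           G t x z = exp (\<i> * complex_of_real (a t) * (z - complex_of_real x)^2) * Gt t x z \<and>
           norm (Gt t x z) \<le> A0 t x * exp (B0 t x * norm z)) \<and>
        (\<forall>t \<in> time_int T. \<forall>x. A0 t x \<ge> 0 \<and> B0 t x \<ge> 0) \<and>
        continuous_on (time_int T \<times> UNIV) (\<lambda>(t, x). A0 t x) \<and>
        continuous_on (time_int T \<times> UNIV) (\<lambda>(t, x). B0 t x) \<and>
        (\<exists>h. continuous_on ({t. 0 \<le> t \<and> ereal t < T} \<times> UNIV) h \<and>
             (\<forall>t \<in> time_int T. \<forall>x. h (t, x) = A0 t x / sqrt (a t))) \<and>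
        (\<exists>h. continuous_on ({t. 0 \<le> t \<and> ereal t < T} \<times> UNIV) h \<and>
             (\<forall>t \<in> time_int T. \<forall>x. h (t, x) = B0 t x)) \<and>
        \<comment> \<open>(iii)\<close>
        (\<forall>x. \<forall>z \<in> \<Omega>. ((\<lambda>t. Gt t x z / complex_of_real (sqrt (a t)))
                         \<longlongrightarrow> 1 / csqrt (\<i> * complex_of_real pi)) (at_right 0)) \<and>
        \<comment> \<open>(iv)\<close>
        (\<forall>t \<in> time_int T. \<forall>x. A1 t x \<ge> 0 \<and> B1 t x \<ge> 0) \<and>
        (\<forall>K. compact K \<and> K \<subseteq> time_int T \<times> UNIV \<longrightarrow> (\<lambda>(t, x). A1 t x) integrable_on K) \<and>
        continuous_on (time_int T \<times> UNIV) (\<lambda>(t, x). B1 t x) \<and>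
        (\<forall>t \<in> time_int T. \<forall>x. \<forall>z \<in> double_sector \<alpha>.
           (\<forall>d. ((\<lambda>y. Gt t y z) has_vector_derivative d) (at x) \<longrightarrow>
                  norm d \<le> A1 t x * exp (B1 t x * norm z)) \<and>
           (\<forall>d. ((\<lambda>y. vector_derivative (\<lambda>w. Gt t w z) (at y)) has_vector_derivative d) (at x)
                  \<longrightarrow> norm d \<le> A1 t x * exp (B1 t x * norm z)) \<and>
           (\<forall>d. ((\<lambda>s. Gt s x z) has_vector_derivative d) (at t) \<longrightarrow>
                  norm d \<le> A1 t x * exp (B1 t x * norm z))))"

definition Psi :: "(real \<Rightarrow> real \<Rightarrow> complex \<Rightarrow> complex) \<Rightarrow> (complex \<Rightarrow> complex)
                    \<Rightarrow> real \<Rightarrow> real \<Rightarrow> complex" where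
  "Psi G F t x = Lim (at_right 0)
     (\<lambda>\<epsilon>::real. LINT y|lborel. complex_of_real (exp (- \<epsilon> * y^2))
                       * G t x (complex_of_real y) * F (complex_of_real y))"

end

theory Submission imports Defs "HOL-Probability.Distributions" "HOL-Real_Asymp.Real_Asymp" begin

lemma gauss_int:
  fixes \<alpha> K :: real
  assumes "\<alpha> > 0"
  shows "integrable lborel (\<lambda>s::real. exp (- \<alpha> * s\<^sup>2 + K * \<bar>s\<bar>))"
proof -
  define \<sigma> where "\<sigma> = 1 / sqrt \<alpha>"
  have \<sigma>pos: "\<sigma> > 0" using assms by (simp add: \<sigma>_def)
  have s2: "\<sigma>\<^sup>2 = 1 / \<alpha>" using assms by (simp add: \<sigma>_def power_divide)
  have nd: "normal_density 0 \<sigma> s = 1 / sqrt (2 * pi / \<alpha>) * exp (- (\<alpha>/2) * s\<^sup>2)" for s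
    unfolding normal_density_def s2 using assms \<sigma>pos by (simp add: field_simps)
  have i1: "integrable lborel (\<lambda>s. sqrt (2 * pi / \<alpha>) * normal_density 0 \<sigma> s)"
    using \<sigma>pos by (intro integrable_mult_right integrable_normal_density) auto
  have eq: "sqrt (2 * pi / \<alpha>) * normal_density 0 \<sigma> s = exp (- (\<alpha>/2) * s\<^sup>2)" for s
  proof -
    have "\<sigma> > 0" using assms by (simp add: \<sigma>_def)
    then show ?thesis using assms by (simp add: nd)
  qed
  have i2: "integrable lborel (\<lambda>s. exp (K\<^sup>2 / (2*\<alpha>)) * exp (- (\<alpha>/2) * s\<^sup>2))"
    using i1 unfolding eq by (intro integrable_mult_right)
  show ?thesis
  proof (rule Bochner_Integration.integrable_bound[OF i2])
    show "(\<lambda>s::real. exp (- \<alpha> * s\<^sup>2 + K * \<bar>s\<bar>)) \<in> borel_measurable lborel" by measurable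
    show "AE s in lborel. norm (exp (- \<alpha> * s\<^sup>2 + K * \<bar>s\<bar>)) \<le> norm (exp (K\<^sup>2 / (2*\<alpha>)) * exp (- (\<alpha>/2) * s\<^sup>2))"
    proof (rule AE_I2)
      fix s :: real
      have "0 \<le> (\<alpha> * \<bar>s\<bar> - K)\<^sup>2" by simp
      hence "K * \<bar>s\<bar> - \<alpha>/2 * s\<^sup>2 \<le> K\<^sup>2 / (2*\<alpha>)"
        using assms by (simp add: field_simps power2_eq_square)
      hence "- \<alpha> * s\<^sup>2 + K * \<bar>s\<bar> \<le> K\<^sup>2 / (2*\<alpha>) + (- (\<alpha>/2) * s\<^sup>2)" by simp
      thus "norm (exp (- \<alpha> * s\<^sup>2 + K * \<bar>s\<bar>)) \<le> norm (exp (K\<^sup>2 / (2*\<alpha>)) * exp (- (\<alpha>/2) * s\<^sup>2))"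
        by (simp add: exp_add[symmetric])
    qed
  qed
qed

definition Wset :: "real \<Rightarrow> complex set" where
  "Wset \<tau> = {z. (0 \<le> Re z \<and> 0 \<le> Im z \<and> Im z \<le> \<tau> * Re z) \<or> (Re z \<le> 0 \<and> Im z \<le> 0 \<and> \<tau> * Re z \<le> Im z)}"

lemma W_re_sq:
  assumes "0 < \<tau>" "\<tau> \<le> 1/2" "z \<in> Wset \<tau>"
  shows "Re (z\<^sup>2) \<ge> (1/2) * (norm z)\<^sup>2"
proof -
  have q: "(Im z)\<^sup>2 \<le> (\<tau> * Re z)\<^sup>2" using assms unfolding Wset_def
    by (auto intro!: power_mono simp: abs_le_square_iff[symmetric])
  have t: "(\<tau> * Re z)\<^sup>2 \<le> (1/4) * (Re z)\<^sup>2"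
  proof -
    have "\<tau>*\<tau> \<le> (1/2)*(1/2)" by (rule mult_mono) (use assms in auto)
    hence "\<tau>\<^sup>2 \<le> 1/4" by (simp add: power2_eq_square)
    from mult_right_mono[OF this, of "(Re z)\<^sup>2"] show ?thesis by (simp add: power_mult_distrib)
  qed
  have "Re (z\<^sup>2) = (Re z)\<^sup>2 - (Im z)\<^sup>2" by (simp add: power2_eq_square)
  moreover have "(norm z)\<^sup>2 = (Re z)\<^sup>2 + (Im z)\<^sup>2" by (simp add: cmod_power2)
  ultimately show ?thesis using q t zero_le_power2[of "Re z"] zero_le_power2[of "Im z"] by linarith
qed

lemma W_im:
  assumes "0 < \<tau>" "z \<in> Wset \<tau>"
  shows "Im ((z - of_real x)\<^sup>2) \<ge> - 2 * \<bar>x\<bar> * norm z"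
proof -
  have "Im ((z - of_real x)\<^sup>2) = 2 * Re z * Im z - 2 * x * Im z" by (simp add: power2_eq_square algebra_simps)
  moreover have "Re z * Im z \<ge> 0" using assms unfolding Wset_def
    by (auto intro: mult_nonneg_nonneg mult_nonpos_nonpos)
  moreover have "x * Im z \<le> \<bar>x\<bar> * norm z"
  proof -
    have "x * Im z \<le> \<bar>x * Im z\<bar>" by simp
    also have "\<dots> \<le> \<bar>x\<bar> * norm z" by (simp add: abs_mult mult_left_mono abs_Im_le_cmod)
    finally show ?thesis .
  qed
  ultimately show ?thesis by linarith
qed

lemma W_sub:
  assumes "0 < \<tau>" "arctan \<tau> \<le> \<alpha>"
  shows "Wset \<tau> \<subseteq> double_sector \<alpha>"
proof
  fix z assume z: "z \<in> Wset \<tau>"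
  show "z \<in> double_sector \<alpha>"
  proof (cases "z = 0")
    case True thus ?thesis by (simp add: double_sector_def)
  next
    case False
    define p q where "p = Re z" "q = Im z"
    have pn: "p \<noteq> 0" using z False assms unfolding Wset_def p_q_def
      by (auto simp: complex_eq_iff)
    define t where "t = q / p"
    have zW: "(0 \<le> p \<and> 0 \<le> q \<and> q \<le> \<tau>*p) \<or> (p \<le> 0 \<and> q \<le> 0 \<and> \<tau>*p \<le> q)"
      using z by (simp add: Wset_def p_q_def)
    have t0: "0 \<le> t \<and> t \<le> \<tau>"
    proof (cases "p > 0")
      case True
      with zW have "0 \<le> q" "q \<le> \<tau>*p" by auto
      hence "0 \<le> q / p" "q / p \<le> \<tau>" using True
        by (auto intro: divide_nonneg_pos simp: pos_divide_le_eq mult.commute)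
      thus ?thesis by (simp add: t_def)
    next
      case False
      with pn have pl: "p < 0" by simp
      with zW have "q \<le> 0" "\<tau>*p \<le> q" by auto
      hence "0 \<le> q / p" "q / p \<le> \<tau>" using pl
        by (auto intro: divide_nonpos_neg simp: neg_divide_le_eq mult.commute)
      thus ?thesis by (simp add: t_def)
    qed
    have "arctan t \<le> arctan \<tau>" using t0 arctan_monotone' by blast
    hence at2: "arctan t \<le> \<alpha>" using assms by linarith
    have at1: "0 \<le> arctan t" using t0 arctan_monotone'[of 0 t] arctan_zero_zero by simp
    note at = at1 at2
    have qt: "Im z = t * Re z" using pn by (simp add: t_def p_q_def)
    have sq: "sqrt (1 + t\<^sup>2) > 0" by (simp add: add_pos_nonneg)
    have nz: "norm z = \<bar>p\<bar> * sqrt (1 + t\<^sup>2)"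
    proof -
      have "norm z = sqrt (p\<^sup>2 + q\<^sup>2)" by (simp add: p_q_def cmod_def)
      also have "p\<^sup>2 + q\<^sup>2 = p\<^sup>2 * (1 + t\<^sup>2)" using pn by (simp add: t_def field_simps power2_eq_square)
      finally show ?thesis by (simp only: real_sqrt_mult real_sqrt_abs)
    qed
    have cs: "cos (arctan t) = 1 / sqrt (1 + t\<^sup>2)" "sin (arctan t) = t / sqrt (1 + t\<^sup>2)"
      by (simp_all add: cos_arctan sin_arctan)
    show ?thesis
    proof (cases "p > 0")
      case True
      have e1: "norm z * cos (arctan t) = Re z" using True sq by (simp add: nz cs p_q_def)
      have e2: "norm z * sin (arctan t) = Im z" using True sq by (simp add: nz cs p_q_def qt)
      have "z = complex_of_real (norm z) * cis (arctan t)"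
        by (simp add: complex_eq_iff e1 e2)
      moreover have "norm z > 0" using False by simp
      ultimately have "\<exists>r \<theta>. r > 0 \<and> z = complex_of_real r * cis \<theta> \<and> (\<theta> \<in> {0..\<alpha>} \<or> \<theta> \<in> {pi..pi+\<alpha>})"
        using at by (intro exI[of _ "norm z"] exI[of _ "arctan t"]) simp
      then show ?thesis by (simp add: double_sector_def)
    next
      case False
      hence pl: "p < 0" using pn by simp
      have e1: "norm z * cos (arctan t) = - Re z" using pl sq by (simp add: nz cs p_q_def)
      have e2: "norm z * sin (arctan t) = - Im z" using pl sq by (simp add: nz cs p_q_def qt)
      have "z = complex_of_real (norm z) * cis (pi + arctan t)"
        by (simp add: complex_eq_iff e1 e2 cos_add sin_add)
      moreover have "norm z > 0" using \<open>z \<noteq> 0\<close> by simp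
      ultimately have "\<exists>r \<theta>. r > 0 \<and> z = complex_of_real r * cis \<theta> \<and> (\<theta> \<in> {0..\<alpha>} \<or> \<theta> \<in> {pi..pi+\<alpha>})"
        using at by (intro exI[of _ "norm z"] exI[of _ "pi + arctan t"]) simp
      then show ?thesis by (simp add: double_sector_def)
    qed
  qed
qed

lemma lim_sym_integral:
  fixes h :: "real \<Rightarrow> complex"
  assumes h: "integrable lborel h"
  shows "(\<lambda>n::nat. integral {- real n..real n} h) \<longlonglongrightarrow> integral\<^sup>L lborel h"
proof -
  have si: "set_integrable lborel {- real n..real n} h" for n
    unfolding set_integrable_def using h by (intro integrable_mult_indicator) auto
  have eq: "integral {- real n..real n} h = (LINT y|lborel. indicator {- real n..real n} y *\<^sub>R h y)" for n
    using set_borel_integral_eq_integral(2)[OF si[of n]] unfolding set_lebesgue_integral_def by simp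
  have "(\<lambda>n. LINT y|lborel. indicator {- real n..real n} y *\<^sub>R h y) \<longlonglongrightarrow> integral\<^sup>L lborel h"
  proof (rule integral_dominated_convergence[where w="\<lambda>y. norm (h y)"])
    show "h \<in> borel_measurable lborel" using h by auto
    show "(\<lambda>y. indicator {- real n..real n} y *\<^sub>R h y) \<in> borel_measurable lborel" for n
      using h by (intro borel_measurable_scaleR) auto
    show "integrable lborel (\<lambda>y. norm (h y))" using h by auto
    show "AE y in lborel. (\<lambda>n. indicator {- real n..real n} y *\<^sub>R h y) \<longlonglongrightarrow> h y"
    proof (rule AE_I2)
      fix y :: real
      obtain N :: nat where N: "\<bar>y\<bar> \<le> real N" using real_arch_simple by blast
      have "\<forall>n\<ge>N. indicator {- real n..real n} y *\<^sub>R h y = h y"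
      proof (intro allI impI)
        fix n assume "n \<ge> N"
        hence "real N \<le> real n" by simp
        hence "\<bar>y\<bar> \<le> real n" using N by linarith
        thus "indicator {- real n..real n} y *\<^sub>R h y = h y" by (auto simp: indicator_def abs_le_iff)
      qed
      thus "(\<lambda>n. indicator {- real n..real n} y *\<^sub>R h y) \<longlonglongrightarrow> h y"
        by (intro tendsto_eventually) (auto simp: eventually_sequentially)
    qed
    show "AE y in lborel. norm (indicator {- real n..real n} y *\<^sub>R h y) \<le> norm (h y)" for n
      by (intro AE_I2) (auto simp: indicator_def)
  qed
  thus ?thesis unfolding eq .
qed

lemma dct_at:
  fixes s :: "'c::first_countable_topology \<Rightarrow> real \<Rightarrow> complex" and f :: "real \<Rightarrow> complex"
  assumes lp: "x islimpt S"
    and meas: "\<And>k. k \<in> S \<Longrightarrow> s k \<in> borel_measurable lborel"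
    and w: "integrable lborel w"
    and lim: "\<And>y. ((\<lambda>k. s k y) \<longlongrightarrow> f y) (at x within S)"
    and bnd: "\<And>k y. k \<in> S \<Longrightarrow> norm (s k y) \<le> w y"
  shows "((\<lambda>k. integral\<^sup>L lborel (s k)) \<longlongrightarrow> integral\<^sup>L lborel f) (at x within S)"
proof -
  have limseq: "(\<lambda>i. s (X i) y) \<longlonglongrightarrow> f y" if "\<forall>i. X i \<in> S - {x}" "X \<longlonglongrightarrow> x" for X y
    using lim[of y] that unfolding tendsto_at_iff_sequentially by (simp add: o_def)
  obtain X0 where X0: "\<forall>n. X0 n \<in> S - {x}" "X0 \<longlonglongrightarrow> x" using lp islimpt_sequential by blast
  have fm: "f \<in> borel_measurable lborel"
    by (rule borel_measurable_LIMSEQ_metric[where f="\<lambda>i. s (X0 i)"])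
       (use X0 meas limseq in auto)
  show ?thesis unfolding tendsto_at_iff_sequentially
  proof (intro allI impI)
    fix X :: "nat \<Rightarrow> 'c" assume X: "\<forall>i. X i \<in> S - {x}" "X \<longlonglongrightarrow> x"
    show "((\<lambda>k. integral\<^sup>L lborel (s k)) \<circ> X) \<longlonglongrightarrow> integral\<^sup>L lborel f"
      unfolding o_def
    proof (rule integral_dominated_convergence[OF fm _ w])
      show "\<And>i. s (X i) \<in> borel_measurable lborel" using X meas by auto
      show "AE y in lborel. (\<lambda>i. s (X i) y) \<longlonglongrightarrow> f y" using limseq[OF X] by auto
      show "\<And>i. AE y in lborel. norm (s (X i) y) \<le> w y" using X bnd by auto
    qed
  qed
qed

lemma cauchy_lip:
  fixes h :: "complex \<Rightarrow> complex"
  assumes holo: "h holomorphic_on U" and op: "open U" and r: "r > 0"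
    and sub: "cball k0 (2*r) \<subseteq> U"
    and M: "\<And>k. k \<in> cball k0 (2*r) \<Longrightarrow> norm (h k) \<le> M"
    and k: "k \<in> ball k0 r"
  shows "norm (h k - h k0) \<le> M / r * norm (k - k0)"
proof (rule field_differentiable_bound[where S="ball k0 r" and f'="deriv h"])
  show "convex (ball k0 r)" by simp
  show "(h has_field_derivative deriv h z) (at z within ball k0 r)" if "z \<in> ball k0 r" for z
    using that sub r by (intro holomorphic_derivI[OF holo op]) (auto simp: dist_norm)
  show "norm (deriv h z) \<le> M / r" if z: "z \<in> ball k0 r" for z
  proof -
    have cb: "cball z r \<subseteq> cball k0 (2*r)"
    proof
      fix x assume "x \<in> cball z r"
      hence "dist z x \<le> r" by simp
      moreover have "dist k0 z < r" using z by simp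
      ultimately have "dist k0 x \<le> 2*r" using dist_triangle[of k0 x z] by linarith
      thus "x \<in> cball k0 (2*r)" by simp
    qed
    have "norm ((deriv ^^ 1) h z) \<le> fact 1 * M / r ^ 1"
    proof (rule Cauchy_inequality)
      show "h holomorphic_on ball z r" using holo cb sub by (meson ball_subset_cball holomorphic_on_subset order_trans)
      show "continuous_on (cball z r) h" using holo cb sub
        by (meson holomorphic_on_imp_continuous_on holomorphic_on_subset order_trans)
      show "norm (h x) \<le> M" if "norm (z - x) = r" for x
        using that cb M by (auto simp: dist_norm)
    qed (use r in auto)
    thus ?thesis by simp
  qed
  show "k \<in> ball k0 r" by fact
  show "k0 \<in> ball k0 r" using r by simp
qed

lemma real_in_W: "0 < \<tau> \<Longrightarrow> complex_of_real y \<in> Wset \<tau>"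
  using mult_nonneg_nonpos[of \<tau> y] by (cases "y \<ge> 0") (auto simp: Wset_def)

lemma line_in_W: "0 < \<tau> \<Longrightarrow> complex_of_real s * Complex 1 \<tau> \<in> Wset \<tau>"
  by (cases "s \<ge> 0") (auto simp: Wset_def mult_nonneg_nonneg mult_nonpos_nonneg)

lemma convex_Wp: "convex {z::complex. 0 \<le> Re z \<and> 0 \<le> Im z \<and> Im z \<le> \<tau> * Re z}"
  unfolding convex_def
proof (intro ballI allI impI, safe)
  fix x y :: complex and u v :: real
  assume h: "0 \<le> Re x" "0 \<le> Im x" "Im x \<le> \<tau> * Re x" "0 \<le> Re y" "0 \<le> Im y" "Im y \<le> \<tau> * Re y"
    "0 \<le> u" "0 \<le> v" "u + v = 1"
  show "0 \<le> Re (u *\<^sub>R x + v *\<^sub>R y)" using h by simp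
  show "0 \<le> Im (u *\<^sub>R x + v *\<^sub>R y)" using h by simp
  have "u * Im x \<le> u * (\<tau> * Re x)" using h by (intro mult_left_mono) auto
  moreover have "v * Im y \<le> v * (\<tau> * Re y)" using h by (intro mult_left_mono) auto
  ultimately show "Im (u *\<^sub>R x + v *\<^sub>R y) \<le> \<tau> * Re (u *\<^sub>R x + v *\<^sub>R y)"
    by (simp add: algebra_simps)
qed

lemma convex_Wm: "convex {z::complex. Re z \<le> 0 \<and> Im z \<le> 0 \<and> \<tau> * Re z \<le> Im z}"
  unfolding convex_def
proof (intro ballI allI impI, safe)
  fix x y :: complex and u v :: real
  assume h: "Re x \<le> 0" "Im x \<le> 0" "\<tau> * Re x \<le> Im x" "Re y \<le> 0" "Im y \<le> 0" "\<tau> * Re y \<le> Im y"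
    "0 \<le> u" "0 \<le> v" "u + v = 1"
  show "Re (u *\<^sub>R x + v *\<^sub>R y) \<le> 0" using h by (simp add: mult_nonneg_nonpos add_nonpos_nonpos)
  show "Im (u *\<^sub>R x + v *\<^sub>R y) \<le> 0" using h by (simp add: mult_nonneg_nonpos add_nonpos_nonpos)
  have "u * (\<tau> * Re x) \<le> u * Im x" using h by (intro mult_left_mono) auto
  moreover have "v * (\<tau> * Re y) \<le> v * Im y" using h by (intro mult_left_mono) auto
  ultimately show "\<tau> * Re (u *\<^sub>R x + v *\<^sub>R y) \<le> Im (u *\<^sub>R x + v *\<^sub>R y)"
    by (simp add: algebra_simps)
qed

lemma hull_Wp:
  assumes "0 < \<tau>" "R \<ge> 0"
  shows "convex hull {0, complex_of_real R, complex_of_real R * Complex 1 \<tau>} \<subseteq> Wset \<tau>"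
proof -
  have "convex hull {0, complex_of_real R, complex_of_real R * Complex 1 \<tau>} \<subseteq> {z::complex. 0 \<le> Re z \<and> 0 \<le> Im z \<and> Im z \<le> \<tau> * Re z}"
    apply (rule hull_minimal) using assms convex_Wp by auto
  also have "\<dots> \<subseteq> Wset \<tau>" by (auto simp: Wset_def)
  finally show ?thesis .
qed

lemma hull_Wm:
  assumes "0 < \<tau>" "R \<ge> 0"
  shows "convex hull {0, - complex_of_real R, - (complex_of_real R * Complex 1 \<tau>)} \<subseteq> Wset \<tau>"
proof -
  have "convex hull {0, - complex_of_real R, - (complex_of_real R * Complex 1 \<tau>)} \<subseteq> {z::complex. Re z \<le> 0 \<and> Im z \<le> 0 \<and> \<tau> * Re z \<le> Im z}"
    apply (rule hull_minimal) using assms convex_Wm by auto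
  also have "\<dots> \<subseteq> Wset \<tau>" by (auto simp: Wset_def)
  finally show ?thesis .
qed

lemma seg_in_hull: "closed_segment a b \<subseteq> convex hull {c, a, b}"
  "closed_segment a b \<subseteq> convex hull {a, b, c}" "closed_segment a b \<subseteq> convex hull {b, c, a}"
  by (simp_all add: segment_convex_hull hull_mono)

lemma vert_seg:
  assumes "0 < \<tau>" "\<tau> \<le> 1/2" "R > 0"
    and z: "z \<in> closed_segment (complex_of_real R) (complex_of_real R * Complex 1 \<tau>) \<or>
            z \<in> closed_segment (- complex_of_real R) (- (complex_of_real R * Complex 1 \<tau>))"
  shows "R \<le> norm z \<and> norm z \<le> 2 * R"
proof -
  obtain u where u: "0 \<le> u" "u \<le> 1" and zz: "z = complex_of_real R + complex_of_real (u*R*\<tau>) * \<i> \<or>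
      z = - (complex_of_real R + complex_of_real (u*R*\<tau>) * \<i>)"
    using z unfolding closed_segment_def
    by (auto simp: complex_eq_iff algebra_simps)
  define w where "w = complex_of_real R + complex_of_real (u*R*\<tau>) * \<i>"
  from zz have "z = w \<or> z = - w" unfolding w_def by blast
  hence nz: "norm z = norm w" by (metis norm_minus_cancel)
  have "norm w \<ge> \<bar>Re w\<bar>" by (rule abs_Re_le_cmod)
  moreover have "Re w = R" by (simp add: w_def)
  moreover have "norm w \<le> \<bar>Re w\<bar> + \<bar>Im w\<bar>" by (rule cmod_le)
  moreover have "\<bar>Im w\<bar> \<le> R"
  proof -
    have "u * \<tau> \<le> 1 * 1" using u assms by (intro mult_mono) auto
    hence "u*R*\<tau> \<le> R" using assms mult_right_mono[of "u*\<tau>" 1 R] by (simp add: algebra_simps)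
    moreover have "0 \<le> u*R*\<tau>" using u assms by simp
    ultimately show ?thesis by (simp add: w_def)
  qed
  ultimately show ?thesis using nz assms by auto
qed

lemma omega_norm: assumes "0 < \<tau>" "\<tau> \<le> 1/2" shows "1 \<le> cmod (Complex 1 \<tau>)" "cmod (Complex 1 \<tau>) \<le> 2"
proof -
  have n: "cmod (Complex 1 \<tau>) = sqrt (1 + \<tau>\<^sup>2)" by (simp add: cmod_def)
  show "1 \<le> cmod (Complex 1 \<tau>)" unfolding n by simp
  have "\<tau>*\<tau> \<le> 1*1" using assms by (intro mult_mono) auto
  hence "\<tau>\<^sup>2 \<le> 3" by (simp add: power2_eq_square)
  hence "sqrt (1 + \<tau>\<^sup>2) \<le> sqrt 4" by (intro real_sqrt_le_mono) simp
  also have "sqrt 4 = (2::real)" by (simp add: real_sqrt_eq_iff)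
  finally show "cmod (Complex 1 \<tau>) \<le> 2" unfolding n .
qed

lemma cint_triangle:
  assumes "f holomorphic_on convex hull {a, b, c}"
  shows "contour_integral (linepath a b) f + contour_integral (linepath b c) f + contour_integral (linepath c a) f = 0"
proof -
  have cont: "continuous_on (convex hull {a, b, c}) f" using assms holomorphic_on_imp_continuous_on by blast
  have i1: "f contour_integrable_on linepath a b" "f contour_integrable_on linepath b c" "f contour_integrable_on linepath c a"
    using continuous_on_subset[OF cont seg_in_hull(2)[of a b c]] continuous_on_subset[OF cont seg_in_hull(1)[of b c a]]
      continuous_on_subset[OF cont seg_in_hull(3)[of c a b]]
    by (auto intro!: contour_integrable_continuous_linepath)
  have "(f has_contour_integral (contour_integral (linepath a b) f + (contour_integral (linepath b c) f + contour_integral (linepath c a) f)))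
        (linepath a b +++ linepath b c +++ linepath c a)"
    using i1 by (intro has_contour_integral_join has_contour_integral_integral valid_path_join) auto
  from has_contour_integral_unique[OF this Cauchy_theorem_triangle[OF assms]] show ?thesis
    by (simp add: add.assoc)
qed

lemma seg_real: "0 < \<tau> \<Longrightarrow> closed_segment (complex_of_real a) (complex_of_real b) \<subseteq> Wset \<tau>"
proof
  fix z assume "0 < \<tau>" "z \<in> closed_segment (complex_of_real a) (complex_of_real b)"
  then obtain u where "z = complex_of_real ((1 - u) * a + u * b)"
    unfolding closed_segment_def by (auto simp: scaleR_conv_of_real)
  thus "z \<in> Wset \<tau>" using real_in_W \<open>0 < \<tau>\<close> by metis
qed

lemma seg_line: "0 < \<tau> \<Longrightarrow> closed_segment (complex_of_real a * Complex 1 \<tau>) (complex_of_real b * Complex 1 \<tau>) \<subseteq> Wset \<tau>"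
proof
  fix z assume "0 < \<tau>" "z \<in> closed_segment (complex_of_real a * Complex 1 \<tau>) (complex_of_real b * Complex 1 \<tau>)"
  then obtain u where "z = complex_of_real ((1 - u) * a + u * b) * Complex 1 \<tau>"
    unfolding closed_segment_def by (auto simp: scaleR_conv_of_real algebra_simps)
  thus "z \<in> Wset \<tau>" using line_in_W \<open>0 < \<tau>\<close> by metis
qed

lemma zero_in_seg: "(0::complex) \<in> closed_segment (- w) w"
  unfolding closed_segment_def by (rule CollectI, rule exI[of _ "1/2"]) (simp add: scaleR_conv_of_real)

lemma rot_R:
  fixes f :: "complex \<Rightarrow> complex"
  assumes \<tau>: "0 < \<tau>" "\<tau> \<le> 1/2" and holo: "f holomorphic_on S" and WS: "Wset \<tau> \<subseteq> S" and R: "R > 0"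
  shows "integral {-R..R} (\<lambda>y. f (of_real y)) - integral {-R..R} (\<lambda>s. f (of_real s * Complex 1 \<tau>) * Complex 1 \<tau>)
     = contour_integral (linepath (- of_real R) (- (of_real R * Complex 1 \<tau>))) f
       - contour_integral (linepath (of_real R) (of_real R * Complex 1 \<tau>)) f"
proof -
  define \<omega> where "\<omega> = Complex 1 \<tau>"
  define r where "r = complex_of_real R"
  define C where "C = (\<lambda>a b. contour_integral (linepath a b) f)"
  have contW: "continuous_on (Wset \<tau>) f"
    using holomorphic_on_imp_continuous_on holomorphic_on_subset[OF holo WS] by blast
  have hp: "f holomorphic_on convex hull {0, r, r*\<omega>}"
    using holomorphic_on_subset[OF holo] hull_Wp[OF \<tau>(1), of R] WS R unfolding r_def \<omega>_def by auto
  have hm: "f holomorphic_on convex hull {0, -r, -(r*\<omega>)}"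
    using holomorphic_on_subset[OF holo] hull_Wm[OF \<tau>(1), of R] WS R unfolding r_def \<omega>_def by auto
  have Tp: "C 0 r + C r (r*\<omega>) + C (r*\<omega>) 0 = 0" unfolding C_def by (rule cint_triangle[OF hp])
  have Tm: "C 0 (-r) + C (-r) (-(r*\<omega>)) + C (-(r*\<omega>)) 0 = 0" unfolding C_def by (rule cint_triangle[OF hm])
  have s1: "closed_segment (-r) r \<subseteq> Wset \<tau>" using seg_real[OF \<tau>(1), of "-R" R] by (simp add: r_def)
  have s2: "closed_segment 0 (-r) \<subseteq> Wset \<tau>" using seg_real[OF \<tau>(1), of 0 "-R"] by (simp add: r_def)
  have s3: "closed_segment (-(r*\<omega>)) (r*\<omega>) \<subseteq> Wset \<tau>" using seg_line[OF \<tau>(1), of "-R" R] by (simp add: r_def \<omega>_def)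
  have s4: "closed_segment 0 (r*\<omega>) \<subseteq> Wset \<tau>" using seg_line[OF \<tau>(1), of 0 R] by (simp add: r_def \<omega>_def)
  have sp1: "C (-r) r = C (-r) 0 + C 0 r" unfolding C_def
    by (rule contour_integral_split_linepath[OF continuous_on_subset[OF contW s1] zero_in_seg])
  have sp2: "C (-(r*\<omega>)) (r*\<omega>) = C (-(r*\<omega>)) 0 + C 0 (r*\<omega>)" unfolding C_def
    by (rule contour_integral_split_linepath[OF continuous_on_subset[OF contW s3] zero_in_seg])
  have rv1: "C 0 (-r) = - C (-r) 0" unfolding C_def
    by (rule contour_integral_reverse_linepath[OF continuous_on_subset[OF contW s2]])
  have rv2: "C 0 (r*\<omega>) = - C (r*\<omega>) 0" unfolding C_def
    by (rule contour_integral_reverse_linepath[OF continuous_on_subset[OF contW s4]])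
  have I1: "C (-r) r = integral {-R..R} (\<lambda>y. f (of_real y))"
    unfolding C_def r_def using R by (subst contour_integral_linepath_Reals_eq) auto
  define J where "J = integral {-R..R} (\<lambda>s. f (of_real s * \<omega>) * \<omega>)"
  have contL: "continuous_on UNIV (\<lambda>s::real. f (of_real s * \<omega>) * \<omega>)"
  proof -
    have "continuous_on UNIV (\<lambda>s::real. of_real s * \<omega>)" by (intro continuous_intros)
    moreover have "(\<lambda>s::real. of_real s * \<omega>) ` UNIV \<subseteq> Wset \<tau>" using line_in_W[OF \<tau>(1)] by (auto simp: \<omega>_def)
    ultimately have "continuous_on UNIV (\<lambda>s::real. f (of_real s * \<omega>))"
      by (rule continuous_on_compose2[OF contW])
    thus ?thesis by (intro continuous_intros)
  qed
  have hJ: "((\<lambda>s. f (of_real s * \<omega>) * \<omega>) has_integral J) {-R..R}"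
    unfolding J_def by (rule integrable_integral, rule integrable_continuous_real, rule continuous_on_subset[OF contL]) auto
  have "((\<lambda>z. f (z * \<omega>) * \<omega>) has_contour_integral J) (linepath (-r) r)"
    using hJ R by (subst has_contour_integral_linepath_Reals_iff) (auto simp: r_def)
  hence "((\<lambda>x. f (linepath (-r) r x * \<omega>) * \<omega> * (r - - r)) has_integral J) {0..1}"
    by (simp add: has_contour_integral_linepath)
  moreover have "(\<lambda>x. f (linepath (-r) r x * \<omega>) * \<omega> * (r - - r)) = (\<lambda>x. f (linepath (-(r*\<omega>)) (r*\<omega>) x) * (r*\<omega> - - (r*\<omega>)))"
    by (rule ext) (simp add: linepath_def scaleR_conv_of_real algebra_simps)
  ultimately have "(f has_contour_integral J) (linepath (-(r*\<omega>)) (r*\<omega>))"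
    by (simp add: has_contour_integral_linepath)
  hence I2: "C (-(r*\<omega>)) (r*\<omega>) = J" unfolding C_def by (rule contour_integral_unique)
  have "integral {-R..R} (\<lambda>y. f (of_real y)) - J = C (-r) (-(r*\<omega>)) - C r (r*\<omega>)"
    using Tp Tm sp1 sp2 rv1 rv2 I1 I2 by algebra
  thus ?thesis unfolding J_def C_def r_def \<omega>_def .
qed

lemma gauss_decay: "(\<delta>::real) > 0 \<Longrightarrow> ((\<lambda>n::nat. real n * exp (- \<delta> * (real n)\<^sup>2 + K * real n)) \<longlongrightarrow> 0) sequentially"
  by real_asymp

lemma rotate_eq:
  fixes f :: "complex \<Rightarrow> complex"
  assumes \<tau>: "0 < \<tau>" "\<tau> \<le> 1/2" and holo: "f holomorphic_on S" and WS: "Wset \<tau> \<subseteq> S"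
    and bnd: "\<And>z. z \<in> Wset \<tau> \<Longrightarrow> norm (f z) \<le> C * exp (- \<delta> * (norm z)\<^sup>2 + K * norm z)"
    and \<delta>: "\<delta> > 0" and K: "K \<ge> 0"
  shows "integrable lborel (\<lambda>y. f (of_real y))"
    "integrable lborel (\<lambda>s. f (of_real s * Complex 1 \<tau>) * Complex 1 \<tau>)"
    "LINT y|lborel. f (of_real y) = LINT s|lborel. f (of_real s * Complex 1 \<tau>) * Complex 1 \<tau>"
proof -
  define \<omega> where "\<omega> = Complex 1 \<tau>"
  have w1: "1 \<le> norm \<omega>" and w2: "norm \<omega> \<le> 2" using omega_norm[OF \<tau>] by (auto simp: \<omega>_def)
  have C: "C \<ge> 0"
  proof -
    have "0 \<le> norm (f 0)" by simp
    also have "\<dots> \<le> C * exp (- \<delta> * (norm (0::complex))\<^sup>2 + K * norm (0::complex))"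
      by (rule bnd) (simp add: Wset_def)
    finally show ?thesis by simp
  qed
  have contW: "continuous_on (Wset \<tau>) f"
    using holomorphic_on_imp_continuous_on holomorphic_on_subset[OF holo WS] by blast
  have contR: "continuous_on UNIV (\<lambda>y::real. f (of_real y))"
    by (rule continuous_on_compose2[OF contW]) (use real_in_W[OF \<tau>(1)] in \<open>auto intro!: continuous_intros\<close>)
  have contL0: "continuous_on UNIV (\<lambda>s::real. f (of_real s * \<omega>))"
    by (rule continuous_on_compose2[OF contW]) (use line_in_W[OF \<tau>(1)] in \<open>auto intro!: continuous_intros simp: \<omega>_def\<close>)
  have contL: "continuous_on UNIV (\<lambda>s::real. f (of_real s * \<omega>) * \<omega>)"
    using contL0 by (intro continuous_intros)
  show int1: "integrable lborel (\<lambda>y. f (of_real y))"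
  proof (rule Bochner_Integration.integrable_bound)
    show "integrable lborel (\<lambda>y. C * exp (- \<delta> * y\<^sup>2 + K * \<bar>y\<bar>))"
      using gauss_int[OF \<delta>] by (intro integrable_mult_right)
    show "(\<lambda>y. f (of_real y)) \<in> borel_measurable lborel"
      using borel_measurable_continuous_onI[OF contR] by simp
    show "AE y in lborel. norm (f (of_real y)) \<le> norm (C * exp (- \<delta> * y\<^sup>2 + K * \<bar>y\<bar>))"
      using bnd[OF real_in_W[OF \<tau>(1)]] C by (intro AE_I2) simp
  qed
  show int2: "integrable lborel (\<lambda>s. f (of_real s * Complex 1 \<tau>) * Complex 1 \<tau>)"
    unfolding \<omega>_def[symmetric]
  proof (rule Bochner_Integration.integrable_bound)
    show "integrable lborel (\<lambda>s. 2 * C * exp (- \<delta> * s\<^sup>2 + (2*K) * \<bar>s\<bar>))"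
      using gauss_int[OF \<delta>] by (intro integrable_mult_right)
    show "(\<lambda>s. f (of_real s * \<omega>) * \<omega>) \<in> borel_measurable lborel"
      using borel_measurable_continuous_onI[OF contL] by simp
    show "AE s in lborel. norm (f (of_real s * \<omega>) * \<omega>) \<le> norm (2 * C * exp (- \<delta> * s\<^sup>2 + (2*K) * \<bar>s\<bar>))"
    proof (rule AE_I2)
      fix s :: real
      have ns: "norm (of_real s * \<omega>) = \<bar>s\<bar> * norm \<omega>" by (simp add: norm_mult)
      have e1: "- \<delta> * (norm (of_real s * \<omega>))\<^sup>2 \<le> - \<delta> * s\<^sup>2"
      proof -
        have "s\<^sup>2 * 1 \<le> s\<^sup>2 * (norm \<omega>)\<^sup>2" using w1 by (intro mult_left_mono) (auto simp: one_le_power)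
        thus ?thesis using \<delta> by (simp add: ns power_mult_distrib)
      qed
      have e2: "K * norm (of_real s * \<omega>) \<le> (2*K) * \<bar>s\<bar>"
        using w2 K unfolding ns by (simp add: mult_left_mono mult.commute mult.left_commute)
      have "norm (f (of_real s * \<omega>)) \<le> C * exp (- \<delta> * (norm (of_real s * \<omega>))\<^sup>2 + K * norm (of_real s * \<omega>))"
        using bnd line_in_W[OF \<tau>(1)] by (simp add: \<omega>_def)
      also have "\<dots> \<le> C * exp (- \<delta> * s\<^sup>2 + (2*K) * \<bar>s\<bar>)"
        using e1 e2 C by (intro mult_left_mono) auto
      finally have "norm (f (of_real s * \<omega>)) * norm \<omega> \<le> C * exp (- \<delta> * s\<^sup>2 + (2*K) * \<bar>s\<bar>) * 2"
        using w2 C by (intro mult_mono) auto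
      thus "norm (f (of_real s * \<omega>) * \<omega>) \<le> norm (2 * C * exp (- \<delta> * s\<^sup>2 + (2*K) * \<bar>s\<bar>))"
        using C by (simp add: norm_mult)
    qed
  qed
  define A where "A = (\<lambda>n::nat. integral {- real n..real n} (\<lambda>y. f (of_real y)))"
  define B where "B = (\<lambda>n::nat. integral {- real n..real n} (\<lambda>s. f (of_real s * \<omega>) * \<omega>))"
  have LA: "A \<longlonglongrightarrow> (LINT y|lborel. f (of_real y))" unfolding A_def by (rule lim_sym_integral[OF int1])
  have LB: "B \<longlonglongrightarrow> (LINT s|lborel. f (of_real s * \<omega>) * \<omega>)" unfolding B_def by (rule lim_sym_integral[OF int2[folded \<omega>_def]])
  have bound: "norm (A n - B n) \<le> (2 * C * \<tau>) * (real n * exp (- \<delta> * (real n)\<^sup>2 + (2*K) * real n))" if n: "n \<ge> 1" for n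
  proof -
    define R where "R = real n"
    have R: "R > 0" using n by (simp add: R_def)
    define r where "r = complex_of_real R"
    have segbound: "norm (contour_integral (linepath a b) f) \<le> C * exp (- \<delta> * R\<^sup>2 + (2*K) * R) * (R * \<tau>)"
      if ab: "(a = r \<and> b = r * \<omega>) \<or> (a = -r \<and> b = -(r * \<omega>))" for a b
    proof -
      have sub: "closed_segment a b \<subseteq> Wset \<tau>"
      proof -
        have "closed_segment a b \<subseteq> convex hull {0, r, r*\<omega>} \<or> closed_segment a b \<subseteq> convex hull {0, -r, -(r*\<omega>)}"
          using ab seg_in_hull(1) by blast
        thus ?thesis using hull_Wp[OF \<tau>(1), of R] hull_Wm[OF \<tau>(1), of R] R by (auto simp: r_def \<omega>_def)
      qed
      have "norm (contour_integral (linepath a b) f) \<le> C * exp (- \<delta> * R\<^sup>2 + (2*K) * R) * norm (b - a)"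
      proof (rule contour_integral_bound_linepath)
        show "f contour_integrable_on linepath a b"
          by (rule contour_integrable_continuous_linepath, rule continuous_on_subset[OF contW sub])
        show "0 \<le> C * exp (- \<delta> * R\<^sup>2 + (2*K) * R)" using C by simp
        fix z assume z: "z \<in> closed_segment a b"
        have zn: "R \<le> norm z \<and> norm z \<le> 2 * R"
          by (rule vert_seg[OF \<tau> R]) (use ab z in \<open>auto simp: r_def \<omega>_def\<close>)
        have "- \<delta> * (norm z)\<^sup>2 \<le> - \<delta> * R\<^sup>2"
          using zn R \<delta> by (intro mult_left_mono_neg power_mono) auto
        moreover have "K * norm z \<le> K * (2 * R)" using zn K by (intro mult_left_mono) auto
        hence "K * norm z \<le> (2*K) * R" by simp
        ultimately have "C * exp (- \<delta> * (norm z)\<^sup>2 + K * norm z) \<le> C * exp (- \<delta> * R\<^sup>2 + (2*K) * R)"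
          using C by (intro mult_left_mono) auto
        thus "norm (f z) \<le> C * exp (- \<delta> * R\<^sup>2 + (2*K) * R)"
          using bnd[OF subsetD[OF sub z]] by linarith
      qed
      moreover have "norm (b - a) = R * \<tau>"
      proof -
        have "r * \<omega> - r = complex_of_real (R * \<tau>) * \<i>" by (simp add: r_def \<omega>_def complex_eq_iff)
        moreover have "b - a = r*\<omega> - r \<or> b - a = -(r*\<omega> - r)" using ab by auto
        hence "norm (b - a) = norm (r*\<omega> - r)" by (metis norm_minus_cancel)
        ultimately have "norm (b - a) = norm (complex_of_real (R * \<tau>) * \<i>)" by simp
        thus ?thesis using R \<tau> by (simp add: norm_mult)
      qed
      ultimately show ?thesis by simp
    qed
    have "A n - B n = contour_integral (linepath (-r) (-(r*\<omega>))) f - contour_integral (linepath r (r*\<omega>)) f"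
      unfolding A_def B_def R_def[symmetric] r_def \<omega>_def by (rule rot_R[OF \<tau> holo WS R])
    hence "norm (A n - B n) \<le> norm (contour_integral (linepath (-r) (-(r*\<omega>))) f) + norm (contour_integral (linepath r (r*\<omega>)) f)"
      by (simp add: norm_triangle_ineq4)
    also have "\<dots> \<le> 2 * (C * exp (- \<delta> * R\<^sup>2 + (2*K) * R) * (R * \<tau>))"
      using segbound[of "-r" "-(r*\<omega>)"] segbound[of r "r*\<omega>"] by simp
    finally show ?thesis by (simp add: R_def algebra_simps)
  qed
  have "(\<lambda>n. A n - B n) \<longlonglongrightarrow> 0"
  proof (rule Lim_null_comparison)
    show "\<forall>\<^sub>F n in sequentially. norm (A n - B n) \<le> (2 * C * \<tau>) * (real n * exp (- \<delta> * (real n)\<^sup>2 + (2*K) * real n))"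
      using bound eventually_sequentially by blast
    show "(\<lambda>n. (2 * C * \<tau>) * (real n * exp (- \<delta> * (real n)\<^sup>2 + (2*K) * real n))) \<longlonglongrightarrow> 0"
      by (rule tendsto_mult_right_zero, rule gauss_decay[OF \<delta>])
  qed
  moreover have "(\<lambda>n. A n - B n) \<longlonglongrightarrow> (LINT y|lborel. f (of_real y)) - (LINT s|lborel. f (of_real s * \<omega>) * \<omega>)"
    using LA LB by (rule tendsto_diff)
  ultimately have "(LINT y|lborel. f (of_real y)) - (LINT s|lborel. f (of_real s * \<omega>) * \<omega>) = 0"
    using LIMSEQ_unique by blast
  thus "LINT y|lborel. f (of_real y) = LINT s|lborel. f (of_real s * Complex 1 \<tau>) * Complex 1 \<tau>"
    by (simp add: \<omega>_def)
qed

lemma exp_i_norm: "norm (exp (\<i> * complex_of_real a * w)) = exp (- a * Im w)"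
  by (simp add: norm_exp_eq_Re)

lemma psi_repr:
  fixes g F :: "complex \<Rightarrow> complex" and x a c b AF BF \<tau> :: real
  assumes \<tau>: "0 < \<tau>" "\<tau> \<le> 1/2" and WS: "Wset \<tau> \<subseteq> S"
    and gholo: "g holomorphic_on S" and Fholo: "F holomorphic_on S"
    and gb: "\<And>z. z \<in> Wset \<tau> \<Longrightarrow> norm (g z) \<le> norm (exp (\<i> * complex_of_real a * (z - complex_of_real x)\<^sup>2)) * (c * exp (b * norm z))"
    and Fb: "\<And>z. z \<in> Wset \<tau> \<Longrightarrow> norm (F z) \<le> AF * exp (BF * norm z)"
    and a: "a > 0" and b: "b \<ge> 0" and BF: "BF \<ge> 0" and c: "c \<ge> 0" and AF: "AF \<ge> 0"
  shows "((\<lambda>\<epsilon>. LINT y|lborel. complex_of_real (exp (- \<epsilon> * y\<^sup>2)) * g (complex_of_real y) * F (complex_of_real y))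
          \<longlongrightarrow> (LINT s|lborel. g (of_real s * Complex 1 \<tau>) * F (of_real s * Complex 1 \<tau>) * Complex 1 \<tau>)) (at_right 0)"
proof -
  define \<omega> where "\<omega> = Complex 1 \<tau>"
  have w2: "norm \<omega> \<le> 2" using omega_norm[OF \<tau>] by (auto simp: \<omega>_def)
  define K where "K = 2 * a * \<bar>x\<bar> + b + BF"
  have K: "K \<ge> 0" using a b BF by (simp add: K_def)
  have gW: "norm (g z) \<le> c * exp ((2 * a * \<bar>x\<bar> + b) * norm z)" if z: "z \<in> Wset \<tau>" for z
  proof -
    have "a * (- (2 * \<bar>x\<bar> * norm z)) \<le> a * Im ((z - complex_of_real x)\<^sup>2)"
      using W_im[OF \<tau>(1) z, of x] a by (intro mult_left_mono) auto
    hence "- a * Im ((z - complex_of_real x)\<^sup>2) \<le> a * (2 * \<bar>x\<bar> * norm z)"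
      by (simp only: mult_minus_right mult_minus_left)
    hence "norm (exp (\<i> * complex_of_real a * (z - complex_of_real x)\<^sup>2)) \<le> exp (2 * a * \<bar>x\<bar> * norm z)"
      unfolding exp_i_norm by (simp add: mult.assoc)
    hence "norm (exp (\<i> * complex_of_real a * (z - complex_of_real x)\<^sup>2)) * (c * exp (b * norm z)) \<le> exp (2 * a * \<bar>x\<bar> * norm z) * (c * exp (b * norm z))"
      using c by (intro mult_right_mono) auto
    hence "norm (g z) \<le> exp (2 * a * \<bar>x\<bar> * norm z) * (c * exp (b * norm z))"
      using gb[OF z] by (rule order_trans[rotated])
    thus ?thesis by (simp add: exp_add[symmetric] algebra_simps)
  qed
  have eq: "(LINT y|lborel. complex_of_real (exp (- \<epsilon> * y\<^sup>2)) * g (complex_of_real y) * F (complex_of_real y))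
      = (LINT s|lborel. exp (- complex_of_real \<epsilon> * (of_real s * \<omega>)\<^sup>2) * g (of_real s * \<omega>) * F (of_real s * \<omega>) * \<omega>)"
    if \<epsilon>: "\<epsilon> > 0" for \<epsilon> :: real
  proof -
    define f where "f = (\<lambda>z. exp (- complex_of_real \<epsilon> * z\<^sup>2) * g z * F z)"
    have fholo: "f holomorphic_on S" unfolding f_def using gholo Fholo by (intro holomorphic_intros)
    have fb: "norm (f z) \<le> (c * AF) * exp (- (\<epsilon>/2) * (norm z)\<^sup>2 + K * norm z)" if z: "z \<in> Wset \<tau>" for z
    proof -
      have "norm (exp (- complex_of_real \<epsilon> * z\<^sup>2)) = exp (- \<epsilon> * Re (z\<^sup>2))" by (simp add: norm_exp_eq_Re)
      also have "\<dots> \<le> exp (- (\<epsilon>/2) * (norm z)\<^sup>2)"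
        using W_re_sq[OF \<tau> z] \<epsilon> by simp
      finally have e1: "norm (exp (- complex_of_real \<epsilon> * z\<^sup>2)) \<le> exp (- (\<epsilon>/2) * (norm z)\<^sup>2)" .
      have "norm (f z) = norm (exp (- complex_of_real \<epsilon> * z\<^sup>2)) * norm (g z) * norm (F z)"
        by (simp add: f_def norm_mult)
      also have "\<dots> \<le> exp (- (\<epsilon>/2) * (norm z)\<^sup>2) * (c * exp ((2 * a * \<bar>x\<bar> + b) * norm z)) * (AF * exp (BF * norm z))"
        using e1 gW[OF z] Fb[OF z] c by (intro mult_mono) auto
      also have "\<dots> = (c * AF) * exp (- (\<epsilon>/2) * (norm z)\<^sup>2 + K * norm z)"
        by (simp add: K_def exp_add[symmetric] algebra_simps)
      finally show ?thesis .
    qed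
    have r: "LINT y|lborel. f (of_real y) = LINT s|lborel. f (of_real s * Complex 1 \<tau>) * Complex 1 \<tau>"
      by (rule rotate_eq(3)[OF \<tau> fholo WS fb]) (use \<epsilon> K in auto)
    have e: "exp (- complex_of_real \<epsilon> * (complex_of_real y)\<^sup>2) = complex_of_real (exp (- \<epsilon> * y\<^sup>2))" for y
    proof -
      have "- complex_of_real \<epsilon> * (complex_of_real y)\<^sup>2 = complex_of_real (- \<epsilon> * y\<^sup>2)" by simp
      thus ?thesis by (simp only: exp_of_real)
    qed
    have fe: "(\<lambda>y. f (of_real y)) = (\<lambda>y. complex_of_real (exp (- \<epsilon> * y\<^sup>2)) * g (complex_of_real y) * F (complex_of_real y))"
      by (rule ext) (simp only: f_def e)
    have "(LINT y|lborel. complex_of_real (exp (- \<epsilon> * y\<^sup>2)) * g (complex_of_real y) * F (complex_of_real y))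
        = (LINT y|lborel. f (of_real y))" by (simp only: fe)
    also have "\<dots> = LINT s|lborel. f (of_real s * Complex 1 \<tau>) * Complex 1 \<tau>" by (rule r)
    also have "\<dots> = (LINT s|lborel. exp (- complex_of_real \<epsilon> * (of_real s * \<omega>)\<^sup>2) * g (of_real s * \<omega>) * F (of_real s * \<omega>) * \<omega>)"
      by (simp add: f_def \<omega>_def)
    finally show ?thesis .
  qed
  define \<Phi> where "\<Phi> = (\<lambda>(\<epsilon>::real) (s::real). exp (- complex_of_real \<epsilon> * (of_real s * \<omega>)\<^sup>2) * g (of_real s * \<omega>) * F (of_real s * \<omega>) * \<omega>)"
  have contW: "continuous_on (Wset \<tau>) g" "continuous_on (Wset \<tau>) F"
    using holomorphic_on_imp_continuous_on holomorphic_on_subset[OF gholo WS] holomorphic_on_subset[OF Fholo WS] by blast+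
  have contg: "continuous_on UNIV (\<lambda>s::real. g (of_real s * \<omega>))"
    by (rule continuous_on_compose2[OF contW(1)]) (use line_in_W[OF \<tau>(1)] in \<open>auto intro!: continuous_intros simp: \<omega>_def\<close>)
  have contF: "continuous_on UNIV (\<lambda>s::real. F (of_real s * \<omega>))"
    by (rule continuous_on_compose2[OF contW(2)]) (use line_in_W[OF \<tau>(1)] in \<open>auto intro!: continuous_intros simp: \<omega>_def\<close>)
  define w where "w = (\<lambda>s::real. 2 * c * AF * exp (- (2 * a * \<tau>) * s\<^sup>2 + (2 * a * \<tau> * \<bar>x\<bar> + 2 * b + 2 * BF) * \<bar>s\<bar>))"
  have wint: "integrable lborel w" unfolding w_def using a \<tau> by (intro integrable_mult_right gauss_int) auto
  have lim: "((\<lambda>\<epsilon>. integral\<^sup>L lborel (\<Phi> \<epsilon>)) \<longlongrightarrow> (LINT s|lborel. g (of_real s * \<omega>) * F (of_real s * \<omega>) * \<omega>)) (at 0 within {0<..})"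
  proof (rule dct_at[where w=w])
    show "(0::real) islimpt {0<..}" using trivial_limit_within[of "0::real" "{0<..}"] trivial_limit_at_right_real by auto
    show "\<Phi> \<epsilon> \<in> borel_measurable lborel" for \<epsilon>
    proof -
      have "continuous_on UNIV (\<Phi> \<epsilon>)" unfolding \<Phi>_def using contg contF by (intro continuous_intros)
      thus ?thesis using borel_measurable_continuous_onI by simp
    qed
    show "integrable lborel w" by (rule wint)
    show "((\<lambda>\<epsilon>. \<Phi> \<epsilon> s) \<longlongrightarrow> g (of_real s * \<omega>) * F (of_real s * \<omega>) * \<omega>) (at 0 within {0<..})" for s
    proof -
      have "((\<lambda>\<epsilon>. \<Phi> \<epsilon> s) \<longlongrightarrow> exp (- complex_of_real 0 * (of_real s * \<omega>)\<^sup>2) * g (of_real s * \<omega>) * F (of_real s * \<omega>) * \<omega>) (at 0 within {0<..})"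
        unfolding \<Phi>_def by (intro tendsto_intros)
      thus ?thesis by simp
    qed
    show "norm (\<Phi> \<epsilon> s) \<le> w s" if "\<epsilon> \<in> {0<..}" for \<epsilon> s
    proof -
      have \<epsilon>: "\<epsilon> > 0" using that by simp
      have ns: "norm (of_real s * \<omega>) \<le> 2 * \<bar>s\<bar>" using w2 by (simp add: norm_mult mult.commute mult_left_mono)
      have e1: "norm (exp (- complex_of_real \<epsilon> * (of_real s * \<omega>)\<^sup>2)) \<le> 1"
      proof -
        have "Re ((of_real s * \<omega>)\<^sup>2) = s\<^sup>2 * (1 - \<tau>\<^sup>2)" by (simp add: \<omega>_def power2_eq_square algebra_simps)
        moreover have "\<tau>\<^sup>2 \<le> 1" using \<tau> by (simp add: power_le_one)
        ultimately have "Re ((of_real s * \<omega>)\<^sup>2) \<ge> 0" by simp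
        thus ?thesis using \<epsilon> by (simp add: norm_exp_eq_Re)
      qed
      have e2: "norm (g (of_real s * \<omega>)) \<le> c * exp (- (2 * a * \<tau>) * s\<^sup>2 + (2 * a * \<tau> * \<bar>x\<bar> + 2 * b) * \<bar>s\<bar>)"
      proof -
        have im: "Im ((of_real s * \<omega> - of_real x)\<^sup>2) = 2 * \<tau> * s\<^sup>2 - 2 * \<tau> * x * s"
          by (simp add: \<omega>_def power2_eq_square algebra_simps)
        have "- a * Im ((of_real s * \<omega> - of_real x)\<^sup>2) \<le> - (2 * a * \<tau>) * s\<^sup>2 + 2 * a * \<tau> * \<bar>x\<bar> * \<bar>s\<bar>"
        proof -
          have "x * s \<le> \<bar>x\<bar> * \<bar>s\<bar>" by (metis abs_ge_self abs_mult)
          hence "a * \<tau> * (x * s) \<le> a * \<tau> * (\<bar>x\<bar> * \<bar>s\<bar>)" using a \<tau> by (intro mult_left_mono) auto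
          thus ?thesis unfolding im by (simp add: algebra_simps)
        qed
        hence n1: "norm (exp (\<i> * complex_of_real a * (of_real s * \<omega> - of_real x)\<^sup>2)) \<le> exp (- (2 * a * \<tau>) * s\<^sup>2 + 2 * a * \<tau> * \<bar>x\<bar> * \<bar>s\<bar>)"
          unfolding exp_i_norm by simp
        have "b * norm (of_real s * \<omega>) \<le> b * (2 * \<bar>s\<bar>)" by (rule mult_left_mono[OF ns b])
        hence n2: "c * exp (b * norm (of_real s * \<omega>)) \<le> c * exp (2 * b * \<bar>s\<bar>)"
          using c by (intro mult_left_mono) auto
        have "norm (g (of_real s * \<omega>)) \<le> exp (- (2 * a * \<tau>) * s\<^sup>2 + 2 * a * \<tau> * \<bar>x\<bar> * \<bar>s\<bar>) * (c * exp (2 * b * \<bar>s\<bar>))"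
        proof -
          have "norm (exp (\<i> * complex_of_real a * (of_real s * \<omega> - of_real x)\<^sup>2)) * (c * exp (b * norm (of_real s * \<omega>)))
              \<le> exp (- (2 * a * \<tau>) * s\<^sup>2 + 2 * a * \<tau> * \<bar>x\<bar> * \<bar>s\<bar>) * (c * exp (2 * b * \<bar>s\<bar>))"
            by (rule mult_mono[OF n1 n2]) (use c in auto)
          thus ?thesis using gb[OF line_in_W[OF \<tau>(1), of s, folded \<omega>_def]] by (rule order_trans[rotated])
        qed
        thus ?thesis by (simp add: exp_add[symmetric] algebra_simps)
      qed
      have e3: "norm (F (of_real s * \<omega>)) \<le> AF * exp (2 * BF * \<bar>s\<bar>)"
      proof -
        have "BF * norm (of_real s * \<omega>) \<le> BF * (2 * \<bar>s\<bar>)" by (rule mult_left_mono[OF ns BF])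
        hence "AF * exp (BF * norm (of_real s * \<omega>)) \<le> AF * exp (2 * BF * \<bar>s\<bar>)"
          using AF by (intro mult_left_mono) auto
        thus ?thesis using Fb[OF line_in_W[OF \<tau>(1), of s, folded \<omega>_def]] by linarith
      qed
      have "norm (\<Phi> \<epsilon> s) = norm (exp (- complex_of_real \<epsilon> * (of_real s * \<omega>)\<^sup>2)) * norm (g (of_real s * \<omega>)) * norm (F (of_real s * \<omega>)) * norm \<omega>"
        by (simp add: \<Phi>_def norm_mult)
      also have "\<dots> \<le> 1 * (c * exp (- (2 * a * \<tau>) * s\<^sup>2 + (2 * a * \<tau> * \<bar>x\<bar> + 2 * b) * \<bar>s\<bar>)) * (AF * exp (2 * BF * \<bar>s\<bar>)) * 2"
        using e1 e2 e3 w2 c AF by (intro mult_mono) auto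
      also have "\<dots> = w s" by (simp add: w_def exp_add[symmetric] algebra_simps)
      finally show ?thesis .
    qed
  qed
  have ev: "\<forall>\<^sub>F \<epsilon> in at_right 0. integral\<^sup>L lborel (\<Phi> \<epsilon>) = (LINT y|lborel. complex_of_real (exp (- \<epsilon> * y\<^sup>2)) * g (complex_of_real y) * F (complex_of_real y))"
    using eq unfolding \<Phi>_def by (auto simp: eventually_at_right_less eventually_at_filter)
  show ?thesis using tendsto_cong[OF ev] lim unfolding \<omega>_def by simp
qed

lemma line_norm: "0 < \<tau> \<Longrightarrow> \<tau> \<le> 1/2 \<Longrightarrow> norm (complex_of_real s * Complex 1 \<tau>) \<le> 2 * \<bar>s\<bar>"
  using omega_norm[of \<tau>] by (simp add: norm_mult mult.commute mult_left_mono)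

lemma g_line_bound:
  fixes g :: "complex \<Rightarrow> complex"
  assumes \<tau>: "0 < \<tau>" "\<tau> \<le> 1/2"
    and gb: "\<And>z. z \<in> Wset \<tau> \<Longrightarrow> norm (g z) \<le> norm (exp (\<i> * complex_of_real a * (z - complex_of_real x)\<^sup>2)) * (c * exp (b * norm z))"
    and a: "a > 0" and b: "b \<ge> 0" and c: "c \<ge> 0"
  shows "norm (g (of_real s * Complex 1 \<tau>)) \<le> c * exp (- (2 * a * \<tau>) * s\<^sup>2 + (2 * a * \<tau> * \<bar>x\<bar> + 2 * b) * \<bar>s\<bar>)"
proof -
  define \<omega> where "\<omega> = Complex 1 \<tau>"
  have ns: "norm (of_real s * \<omega>) \<le> 2 * \<bar>s\<bar>" using line_norm[OF \<tau>] by (simp add: \<omega>_def)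
  have im: "Im ((of_real s * \<omega> - of_real x)\<^sup>2) = 2 * \<tau> * s\<^sup>2 - 2 * \<tau> * x * s"
    by (simp add: \<omega>_def power2_eq_square algebra_simps)
  have "- a * Im ((of_real s * \<omega> - of_real x)\<^sup>2) \<le> - (2 * a * \<tau>) * s\<^sup>2 + 2 * a * \<tau> * \<bar>x\<bar> * \<bar>s\<bar>"
  proof -
    have "x * s \<le> \<bar>x\<bar> * \<bar>s\<bar>" by (metis abs_ge_self abs_mult)
    hence "a * \<tau> * (x * s) \<le> a * \<tau> * (\<bar>x\<bar> * \<bar>s\<bar>)" using a \<tau> by (intro mult_left_mono) auto
    thus ?thesis unfolding im by (simp add: algebra_simps)
  qed
  hence n1: "norm (exp (\<i> * complex_of_real a * (of_real s * \<omega> - of_real x)\<^sup>2)) \<le> exp (- (2 * a * \<tau>) * s\<^sup>2 + 2 * a * \<tau> * \<bar>x\<bar> * \<bar>s\<bar>)"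
    unfolding exp_i_norm by simp
  have "b * norm (of_real s * \<omega>) \<le> b * (2 * \<bar>s\<bar>)" by (rule mult_left_mono[OF ns b])
  hence n2: "c * exp (b * norm (of_real s * \<omega>)) \<le> c * exp (2 * b * \<bar>s\<bar>)"
    using c by (intro mult_left_mono) auto
  have "norm (exp (\<i> * complex_of_real a * (of_real s * \<omega> - of_real x)\<^sup>2)) * (c * exp (b * norm (of_real s * \<omega>)))
      \<le> exp (- (2 * a * \<tau>) * s\<^sup>2 + 2 * a * \<tau> * \<bar>x\<bar> * \<bar>s\<bar>) * (c * exp (2 * b * \<bar>s\<bar>))"
    by (rule mult_mono[OF n1 n2]) (use c in auto)
  hence "norm (g (of_real s * \<omega>)) \<le> exp (- (2 * a * \<tau>) * s\<^sup>2 + 2 * a * \<tau> * \<bar>x\<bar> * \<bar>s\<bar>) * (c * exp (2 * b * \<bar>s\<bar>))"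
    using gb[OF line_in_W[OF \<tau>(1), of s, folded \<omega>_def]] by (rule order_trans[rotated])
  thus ?thesis by (simp add: exp_add[symmetric] algebra_simps \<omega>_def)
qed

lemma holo_param:
  fixes g :: "complex \<Rightarrow> complex" and \<phi> :: "complex \<Rightarrow> complex \<Rightarrow> complex" and A B :: "complex \<Rightarrow> real"
  assumes \<tau>: "0 < \<tau>" "\<tau> \<le> 1/2" and WS: "Wset \<tau> \<subseteq> S" and gholo: "g holomorphic_on S"
    and gb: "\<And>z. z \<in> Wset \<tau> \<Longrightarrow> norm (g z) \<le> norm (exp (\<i> * complex_of_real a * (z - complex_of_real x)\<^sup>2)) * (c * exp (b * norm z))"
    and a: "a > 0" and b: "b \<ge> 0" and c: "c \<ge> 0"
    and U: "open U"
    and phi_holo: "\<And>\<kappa>. \<kappa> \<in> U \<Longrightarrow> (\<phi> \<kappa>) holomorphic_on S"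
    and kappa_holo: "\<And>z. z \<in> S \<Longrightarrow> (\<lambda>\<kappa>. \<phi> \<kappa> z) holomorphic_on U"
    and phi_bound: "\<And>\<kappa> z. \<kappa> \<in> U \<Longrightarrow> z \<in> S \<Longrightarrow> norm (\<phi> \<kappa> z) \<le> A \<kappa> * exp (B \<kappa> * norm z)"
    and A_nonneg: "\<And>\<kappa>. \<kappa> \<in> U \<Longrightarrow> A \<kappa> \<ge> 0"
    and B_nonneg: "\<And>\<kappa>. \<kappa> \<in> U \<Longrightarrow> B \<kappa> \<ge> 0"
    and A_cont: "continuous_on U A" and B_cont: "continuous_on U B"
  shows "(\<lambda>\<kappa>. LINT s|lborel. g (of_real s * Complex 1 \<tau>) * \<phi> \<kappa> (of_real s * Complex 1 \<tau>) * Complex 1 \<tau>) holomorphic_on U"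
proof -
  define \<omega> where "\<omega> = Complex 1 \<tau>"
  have w2: "norm \<omega> \<le> 2" using omega_norm[OF \<tau>] by (auto simp: \<omega>_def)
  have lineS: "of_real s * \<omega> \<in> S" for s using line_in_W[OF \<tau>(1)] WS by (auto simp: \<omega>_def)
  define I where "I = (\<lambda>\<kappa> s. g (of_real s * \<omega>) * \<phi> \<kappa> (of_real s * \<omega>) * \<omega>)"
  define K0 where "K0 = 2 * a * \<tau> * \<bar>x\<bar> + 2 * b"
  have gl: "norm (g (of_real s * \<omega>)) \<le> c * exp (- (2 * a * \<tau>) * s\<^sup>2 + K0 * \<bar>s\<bar>)" for s
    using g_line_bound[OF \<tau> gb a b c] by (simp add: \<omega>_def K0_def)
  have contg: "continuous_on UNIV (\<lambda>s::real. g (of_real s * \<omega>))"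
    by (rule continuous_on_compose2[OF holomorphic_on_imp_continuous_on[OF gholo]]) (use lineS in \<open>auto intro!: continuous_intros\<close>)
  have contphi: "continuous_on UNIV (\<lambda>s::real. \<phi> \<kappa> (of_real s * \<omega>))" if "\<kappa> \<in> U" for \<kappa>
    by (rule continuous_on_compose2[OF holomorphic_on_imp_continuous_on[OF phi_holo[OF that]]]) (use lineS in \<open>auto intro!: continuous_intros\<close>)
  have measI: "I \<kappa> \<in> borel_measurable lborel" if "\<kappa> \<in> U" for \<kappa>
  proof -
    have "continuous_on UNIV (I \<kappa>)" unfolding I_def using contg contphi[OF that] by (intro continuous_intros)
    thus ?thesis using borel_measurable_continuous_onI by simp
  qed
  have intI: "integrable lborel (I \<kappa>)" if k: "\<kappa> \<in> U" for \<kappa>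
  proof (rule Bochner_Integration.integrable_bound)
    show "integrable lborel (\<lambda>s. (2 * c * A \<kappa>) * exp (- (2 * a * \<tau>) * s\<^sup>2 + (K0 + 2 * B \<kappa>) * \<bar>s\<bar>))"
      using a \<tau> by (intro integrable_mult_right gauss_int) auto
    show "I \<kappa> \<in> borel_measurable lborel" by (rule measI[OF k])
    show "AE s in lborel. norm (I \<kappa> s) \<le> norm ((2 * c * A \<kappa>) * exp (- (2 * a * \<tau>) * s\<^sup>2 + (K0 + 2 * B \<kappa>) * \<bar>s\<bar>))"
    proof (rule AE_I2)
      fix s :: real
      have "B \<kappa> * norm (of_real s * \<omega>) \<le> B \<kappa> * (2 * \<bar>s\<bar>)"
        using line_norm[OF \<tau>] B_nonneg[OF k] by (intro mult_left_mono) (auto simp: \<omega>_def)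
      hence "A \<kappa> * exp (B \<kappa> * norm (of_real s * \<omega>)) \<le> A \<kappa> * exp (2 * B \<kappa> * \<bar>s\<bar>)"
        using A_nonneg[OF k] by (intro mult_left_mono) auto
      hence pb: "norm (\<phi> \<kappa> (of_real s * \<omega>)) \<le> A \<kappa> * exp (2 * B \<kappa> * \<bar>s\<bar>)"
        using phi_bound[OF k lineS[of s]] by linarith
      have "norm (I \<kappa> s) = norm (g (of_real s * \<omega>)) * norm (\<phi> \<kappa> (of_real s * \<omega>)) * norm \<omega>"
        by (simp add: I_def norm_mult)
      also have "\<dots> \<le> (c * exp (- (2 * a * \<tau>) * s\<^sup>2 + K0 * \<bar>s\<bar>)) * (A \<kappa> * exp (2 * B \<kappa> * \<bar>s\<bar>)) * 2"
        using gl[of s] pb w2 c A_nonneg[OF k] by (intro mult_mono) auto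
      also have "\<dots> = norm ((2 * c * A \<kappa>) * exp (- (2 * a * \<tau>) * s\<^sup>2 + (K0 + 2 * B \<kappa>) * \<bar>s\<bar>))"
        using c A_nonneg[OF k] by (simp add: exp_add[symmetric] algebra_simps abs_mult)
      finally show "norm (I \<kappa> s) \<le> norm ((2 * c * A \<kappa>) * exp (- (2 * a * \<tau>) * s\<^sup>2 + (K0 + 2 * B \<kappa>) * \<bar>s\<bar>))" .
    qed
  qed
  have eqfun: "(\<lambda>\<kappa>. LINT s|lborel. g (of_real s * Complex 1 \<tau>) * \<phi> \<kappa> (of_real s * Complex 1 \<tau>) * Complex 1 \<tau>)
      = (\<lambda>k. integral\<^sup>L lborel (I k))" by (simp add: I_def \<omega>_def)
  show ?thesis unfolding eqfun
  proof (subst holomorphic_on_open[OF U], intro ballI)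
    fix k0 assume k0: "k0 \<in> U"
    obtain e where e: "e > 0" "cball k0 e \<subseteq> U" using U k0 open_contains_cball by blast
    define r where "r = e / 2"
    have r: "r > 0" "cball k0 (2*r) \<subseteq> U" using e by (auto simp: r_def)
    have cpt: "compact (cball k0 (2*r))" by simp
    obtain MA where MA: "\<And>k. k \<in> cball k0 (2*r) \<Longrightarrow> norm (A k) \<le> MA"
      using compact_imp_bounded[OF compact_continuous_image[OF continuous_on_subset[OF A_cont r(2)] cpt]]
      unfolding bounded_iff by blast
    obtain MB where MB: "\<And>k. k \<in> cball k0 (2*r) \<Longrightarrow> norm (B k) \<le> MB"
      using compact_imp_bounded[OF compact_continuous_image[OF continuous_on_subset[OF B_cont r(2)] cpt]]
      unfolding bounded_iff by blast
    have k0c: "k0 \<in> cball k0 (2*r)" using r by simp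
    have MA0: "MA \<ge> 0" using MA[OF k0c] by (meson norm_ge_zero order_trans)
    have MB0: "MB \<ge> 0" using MB[OF k0c] by (meson norm_ge_zero order_trans)
    define M where "M = (\<lambda>z::complex. MA * exp (MB * norm z))"
    have phiM: "norm (\<phi> k z) \<le> M z" if "k \<in> cball k0 (2*r)" "z \<in> S" for k z
    proof -
      have kU: "k \<in> U" using that r by auto
      have "B k * norm z \<le> MB * norm z" using MB[OF that(1)] B_nonneg[OF kU] by (intro mult_right_mono) auto
      hence "A k * exp (B k * norm z) \<le> MA * exp (MB * norm z)"
        using MA[OF that(1)] A_nonneg[OF kU] by (intro mult_mono) auto
      thus ?thesis using phi_bound[OF kU that(2)] by (simp add: M_def)
    qed
    define D where "D = (\<lambda>z. deriv (\<lambda>k. \<phi> k z) k0)"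
    define Q where "Q = (\<lambda>k s. g (of_real s * \<omega>) * \<omega> * ((\<phi> k (of_real s * \<omega>) - \<phi> k0 (of_real s * \<omega>)) / (k - k0)))"
    define wq where "wq = (\<lambda>s::real. (2 * c * MA / r) * exp (- (2 * a * \<tau>) * s\<^sup>2 + (K0 + 2 * MB) * \<bar>s\<bar>))"
    have lim: "((\<lambda>k. integral\<^sup>L lborel (Q k)) \<longlongrightarrow> (LINT s|lborel. g (of_real s * \<omega>) * \<omega> * D (of_real s * \<omega>))) (at k0 within ball k0 r)"
    proof (rule dct_at[where w=wq])
      show "k0 islimpt ball k0 r" using r by (simp add: islimpt_ball)
      show "Q k \<in> borel_measurable lborel" if "k \<in> ball k0 r" for k
      proof -
        have kU: "k \<in> U" using that r by (auto simp: dist_norm)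
        show ?thesis
        proof (cases "k = k0")
          case True
          hence "Q k = (\<lambda>_. 0)" by (simp add: Q_def fun_eq_iff)
          thus ?thesis by simp
        next
          case False
          have "continuous_on UNIV (Q k)" unfolding Q_def using contg contphi[OF kU] contphi[OF k0] False
            by (intro continuous_intros) auto
          thus ?thesis using borel_measurable_continuous_onI by simp
        qed
      qed
      show "integrable lborel wq" unfolding wq_def using a \<tau> by (intro integrable_mult_right gauss_int) auto
      show "((\<lambda>k. Q k s) \<longlongrightarrow> g (of_real s * \<omega>) * \<omega> * D (of_real s * \<omega>)) (at k0 within ball k0 r)" for s
      proof -
        have "((\<lambda>k. \<phi> k (of_real s * \<omega>)) has_field_derivative D (of_real s * \<omega>)) (at k0 within ball k0 r)"
          unfolding D_def by (rule holomorphic_derivI[OF kappa_holo[OF lineS] U k0])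
        hence "((\<lambda>k. (\<phi> k (of_real s * \<omega>) - \<phi> k0 (of_real s * \<omega>)) / (k - k0)) \<longlongrightarrow> D (of_real s * \<omega>)) (at k0 within ball k0 r)"
          by (simp add: has_field_derivative_iff)
        thus ?thesis unfolding Q_def by (intro tendsto_mult tendsto_const)
      qed
      show "norm (Q k s) \<le> wq s" if k: "k \<in> ball k0 r" for k s
      proof (cases "k = k0")
        case True thus ?thesis using c MA0 r by (simp add: Q_def wq_def)
      next
        case False
        have lip: "norm (\<phi> k (of_real s * \<omega>) - \<phi> k0 (of_real s * \<omega>)) \<le> M (of_real s * \<omega>) / r * norm (k - k0)"
          by (rule cauchy_lip[OF kappa_holo[OF lineS] U r(1) r(2) _ k]) (rule phiM, auto intro: lineS)
        hence q: "norm ((\<phi> k (of_real s * \<omega>) - \<phi> k0 (of_real s * \<omega>)) / (k - k0)) \<le> M (of_real s * \<omega>) / r"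
          using False by (simp add: norm_divide divide_le_eq)
        have "MB * norm (of_real s * \<omega>) \<le> MB * (2 * \<bar>s\<bar>)"
          using line_norm[OF \<tau>] MB0 by (intro mult_left_mono) (auto simp: \<omega>_def)
        hence "MA * exp (MB * norm (of_real s * \<omega>)) \<le> MA * exp (2 * MB * \<bar>s\<bar>)"
          using MA0 by (intro mult_left_mono) auto
        hence Ml: "M (of_real s * \<omega>) / r \<le> MA * exp (2 * MB * \<bar>s\<bar>) / r"
          using r by (simp add: M_def divide_right_mono)
        have "norm (Q k s) = norm (g (of_real s * \<omega>)) * norm \<omega> * norm ((\<phi> k (of_real s * \<omega>) - \<phi> k0 (of_real s * \<omega>)) / (k - k0))"
          unfolding Q_def by (simp only: norm_mult)
        also have "\<dots> \<le> (c * exp (- (2 * a * \<tau>) * s\<^sup>2 + K0 * \<bar>s\<bar>)) * 2 * (MA * exp (2 * MB * \<bar>s\<bar>) / r)"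
          using gl[of s] w2 q Ml c by (intro mult_mono) auto
        also have "\<dots> = wq s" by (simp add: wq_def exp_add[symmetric] algebra_simps)
        finally show ?thesis .
      qed
    qed
    have ev: "\<forall>\<^sub>F k in at k0 within ball k0 r. integral\<^sup>L lborel (Q k) = (integral\<^sup>L lborel (I k) - integral\<^sup>L lborel (I k0)) / (k - k0)"
    proof -
      have "integral\<^sup>L lborel (Q k) = (integral\<^sup>L lborel (I k) - integral\<^sup>L lborel (I k0)) / (k - k0)"
        if k: "k \<in> ball k0 r" "k \<noteq> k0" for k
      proof -
        have kU: "k \<in> U" using k r by (auto simp: dist_norm)
        have "Q k = (\<lambda>s. (I k s - I k0 s) / (k - k0))"
          using k by (auto simp: Q_def I_def fun_eq_iff field_simps)
        hence "integral\<^sup>L lborel (Q k) = (LINT s|lborel. I k s - I k0 s) / (k - k0)"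
          by (simp add: integral_divide_zero)
        also have "\<dots> = (integral\<^sup>L lborel (I k) - integral\<^sup>L lborel (I k0)) / (k - k0)"
          using intI[OF kU] intI[OF k0] by (simp add: Bochner_Integration.integral_diff)
        finally show ?thesis .
      qed
      thus ?thesis by (auto simp: eventually_at_filter)
    qed
    have "((\<lambda>k. (integral\<^sup>L lborel (I k) - integral\<^sup>L lborel (I k0)) / (k - k0)) \<longlongrightarrow> (LINT s|lborel. g (of_real s * \<omega>) * \<omega> * D (of_real s * \<omega>))) (at k0 within ball k0 r)"
      using tendsto_cong[OF ev] lim by simp
    hence "((\<lambda>k. (integral\<^sup>L lborel (I k) - integral\<^sup>L lborel (I k0)) / (k - k0)) \<longlongrightarrow> (LINT s|lborel. g (of_real s * \<omega>) * \<omega> * D (of_real s * \<omega>))) (at k0)"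
      using r by (simp add: at_within_open[of k0 "ball k0 r"])
    hence "((\<lambda>k. integral\<^sup>L lborel (I k)) has_field_derivative (LINT s|lborel. g (of_real s * \<omega>) * \<omega> * D (of_real s * \<omega>))) (at k0)"
      by (simp add: has_field_derivative_iff)
    thus "\<exists>f'. ((\<lambda>k. integral\<^sup>L lborel (I k)) has_field_derivative f') (at k0)" by blast
  qed
qed

theorem theorem4p7:
  fixes T :: ereal and V :: "real \<Rightarrow> real \<Rightarrow> complex" and \<alpha> :: real
    and \<Omega> :: "complex set" and G :: "real \<Rightarrow> real \<Rightarrow> complex \<Rightarrow> complex"
    and \<O> :: "complex set" and \<phi> :: "complex \<Rightarrow> complex \<Rightarrow> complex"
    and A B :: "complex \<Rightarrow> real"
  assumes G: "assumption_G T V \<alpha> \<Omega> G"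
    and O_open: "open \<O>"
    and phi_holo: "\<And>\<kappa>. \<kappa> \<in> \<O> \<Longrightarrow> (\<phi> \<kappa>) holomorphic_on \<Omega>"
    and phi_bound: "\<And>\<kappa> z. \<kappa> \<in> \<O> \<Longrightarrow> z \<in> \<Omega> \<Longrightarrow> norm (\<phi> \<kappa> z) \<le> A \<kappa> * exp (B \<kappa> * norm z)"
    and A_nonneg: "\<And>\<kappa>. \<kappa> \<in> \<O> \<Longrightarrow> A \<kappa> \<ge> 0"
    and B_nonneg: "\<And>\<kappa>. \<kappa> \<in> \<O> \<Longrightarrow> B \<kappa> \<ge> 0"
    and A_cont: "continuous_on \<O> A"
    and B_cont: "continuous_on \<O> B"
    and kappa_holo: "\<And>z. z \<in> \<Omega> \<Longrightarrow> (\<lambda>\<kappa>. \<phi> \<kappa> z) holomorphic_on \<O>"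
  shows "\<forall>t \<in> time_int T. \<forall>x. (\<lambda>\<kappa>. Psi G (\<phi> \<kappa>) t x) holomorphic_on \<O>"
proof (intro ballI allI)
  fix t x assume t: "t \<in> time_int T"
  have H1: "0 < \<alpha> \<and> \<alpha> < pi / 2 \<and> double_sector \<alpha> \<subseteq> \<Omega> \<and> (\<forall>t \<in> time_int T. \<forall>x. (\<lambda>z. G t x z) holomorphic_on \<Omega>)"
    using G unfolding assumption_G_def by (elim conjE) (intro conjI; assumption)
  have alpha: "0 < \<alpha>" "\<alpha> < pi / 2" and DS: "double_sector \<alpha> \<subseteq> \<Omega>"
    and Gholo: "\<forall>t \<in> time_int T. \<forall>x. (\<lambda>z. G t x z) holomorphic_on \<Omega>"
    using H1 by auto
  from G obtain a :: "real \<Rightarrow> real" and Gt :: "real \<Rightarrow> real \<Rightarrow> complex \<Rightarrow> complex" and A0 B0 :: "real \<Rightarrow> real \<Rightarrow> real"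
    where apos: "\<forall>t \<in> time_int T. a t > 0"
      and Grep: "\<forall>t \<in> time_int T. \<forall>x. \<forall>z \<in> \<Omega>.
           G t x z = exp (\<i> * complex_of_real (a t) * (z - complex_of_real x)^2) * Gt t x z \<and>
           norm (Gt t x z) \<le> A0 t x * exp (B0 t x * norm z)"
      and AB0: "\<forall>t \<in> time_int T. \<forall>x. A0 t x \<ge> 0 \<and> B0 t x \<ge> 0"
    using G unfolding assumption_G_def by (elim conjE exE) (rule that; assumption)
  define \<tau> where "\<tau> = min (1/2) (tan \<alpha>)"
  have tan_pos: "tan \<alpha> > 0" using alpha by (simp add: tan_gt_zero)
  have \<tau>: "0 < \<tau>" "\<tau> \<le> 1/2" using tan_pos by (auto simp: \<tau>_def)
  have "arctan \<tau> \<le> arctan (tan \<alpha>)" by (intro arctan_monotone') (simp add: \<tau>_def)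
  also have "arctan (tan \<alpha>) = \<alpha>" using alpha by (intro arctan_tan) auto
  finally have WS: "Wset \<tau> \<subseteq> \<Omega>" using W_sub[OF \<tau>(1)] DS by blast
  define g where "g = G t x"
  have gholo: "g holomorphic_on \<Omega>" using Gholo t by (simp add: g_def)
  have a: "a t > 0" using apos t by blast
  have b: "B0 t x \<ge> 0" and c: "A0 t x \<ge> 0" using AB0 t by auto
  have gb: "norm (g z) \<le> norm (exp (\<i> * complex_of_real (a t) * (z - complex_of_real x)\<^sup>2)) * (A0 t x * exp (B0 t x * norm z))"
    if z: "z \<in> Wset \<tau>" for z
  proof -
    have zO: "z \<in> \<Omega>" using z WS by blast
    have "norm (g z) = norm (exp (\<i> * complex_of_real (a t) * (z - complex_of_real x)\<^sup>2)) * norm (Gt t x z)"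
      using Grep t zO by (simp add: g_def norm_mult)
    also have "\<dots> \<le> norm (exp (\<i> * complex_of_real (a t) * (z - complex_of_real x)\<^sup>2)) * (A0 t x * exp (B0 t x * norm z))"
      using Grep t zO by (intro mult_left_mono) auto
    finally show ?thesis .
  qed
  have eqpsi: "Psi G (\<phi> \<kappa>) t x = (LINT s|lborel. g (of_real s * Complex 1 \<tau>) * \<phi> \<kappa> (of_real s * Complex 1 \<tau>) * Complex 1 \<tau>)"
    if k: "\<kappa> \<in> \<O>" for \<kappa>
  proof -
    have "((\<lambda>\<epsilon>. LINT y|lborel. complex_of_real (exp (- \<epsilon> * y\<^sup>2)) * g (complex_of_real y) * \<phi> \<kappa> (complex_of_real y))
          \<longlongrightarrow> (LINT s|lborel. g (of_real s * Complex 1 \<tau>) * \<phi> \<kappa> (of_real s * Complex 1 \<tau>) * Complex 1 \<tau>)) (at_right 0)"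
    proof (rule psi_repr[OF \<tau> WS gholo phi_holo[OF k] gb _ a b _ c A_nonneg[OF k]])
      show "\<And>z. z \<in> Wset \<tau> \<Longrightarrow> norm (\<phi> \<kappa> z) \<le> A \<kappa> * exp (B \<kappa> * norm z)"
        using phi_bound[OF k] WS by blast
      show "0 \<le> B \<kappa>" by (rule B_nonneg[OF k])
    qed
    thus ?thesis unfolding Psi_def g_def by (intro tendsto_Lim) (auto simp: trivial_limit_at_right_real)
  qed
  have "(\<lambda>\<kappa>. LINT s|lborel. g (of_real s * Complex 1 \<tau>) * \<phi> \<kappa> (of_real s * Complex 1 \<tau>) * Complex 1 \<tau>) holomorphic_on \<O>"
    by (rule holo_param[OF \<tau> WS gholo gb a b c O_open phi_holo kappa_holo phi_bound A_nonneg B_nonneg A_cont B_cont])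
  thus "(\<lambda>\<kappa>. Psi G (\<phi> \<kappa>) t x) holomorphic_on \<O>"
    by (rule holomorphic_transform) (simp add: eqpsi)
qed

end
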